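(* Let $n$, $k$, $t$ be positive integers with $k\geq t+3$ and $n\geq 2k+1+\delta_{2,q}$. For positive integers $x$ define $$g(n,k,t,x)={x-t\brack 1}{n-t-1\brack k-t-1}+q^{x-t}{k-x+1\brack 1}{k-t+1\brack 1}{n-t-2\brack k-t-2}+q^{x-t}{k-x+1\brack 1}+q^{x-t+1}{t\brack 1}{k-t\brack 1}{n-x\brack k-x}+2.$$ Then $g(n,k,t,x)<g(n,k,t,x+1)$ for every $x\in\{t+2,\ldots,k-1\}$.
   Context: $q$ is a prime power and ${m\brack r}$ denotes the Gaussian binomial coefficient $\prod_{i=0}^{r-1}\frac{q^{m-i}-1}{q^{r-i}-1}$ (equal to $1$ for $r=0$). $\delta_{a,b}$ is the Kronecker delta. *)

theory Defs
  imports Complex_Main "HOL-Computational_Algebra.Primes"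
begin

definition prime_power_nat :: "nat \<Rightarrow> bool" where
  "prime_power_nat q \<longleftrightarrow> (\<exists>p e. prime p \<and> e \<ge> 1 \<and> q = p ^ e)"

definition gauss_binom :: "nat \<Rightarrow> nat \<Rightarrow> nat \<Rightarrow> real" where
  "gauss_binom q m r = (\<Prod>i<r. (real q ^ (m - i) - 1) / (real q ^ (r - i) - 1))"

definition gfun :: "nat \<Rightarrow> nat \<Rightarrow> nat \<Rightarrow> nat \<Rightarrow> nat \<Rightarrow> real" where
  "gfun q n k t x =
     gauss_binom q (x - t) 1 * gauss_binom q (n - t - 1) (k - t - 1)
   + real q ^ (x - t) * gauss_binom q (k - x + 1) 1 * gauss_binom q (k - t + 1) 1
       * gauss_binom q (n - t - 2) (k - t - 2)
   + real q ^ (x - t) * gauss_binom q (k - x + 1) 1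
   + real q ^ (x - t + 1) * gauss_binom q t 1 * gauss_binom q (k - t) 1
       * gauss_binom q (n - x) (k - x)
   + 2"

end

theory Submission
  imports Defs
begin

lemma gb1: "gauss_binom q m 1 = (real q ^ m - 1) / (real q - 1)"
  by (simp add: gauss_binom_def lessThan_Suc)

lemma gb_ge1: assumes "2 \<le> q" "r \<le> m" shows "1 \<le> gauss_binom q m r"
  unfolding gauss_binom_def
proof (rule prod_ge_1)
  fix i assume "i \<in> {..<r}"
  hence i: "i < r" by simp
  have q1: "1 < real q" using assms by simp
  have a: "1 < real q ^ (r - i)" using q1 i by (simp add: one_less_power)
  have b: "real q ^ (r - i) \<le> real q ^ (m - i)" using q1 assms i
    by (intro power_increasing) auto
  show "1 \<le> (real q ^ (m - i) - 1) / (real q ^ (r - i) - 1)"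
  proof -
    have "0 < real q ^ (r - i) - 1" using a by simp
    moreover have "real q ^ (r - i) - 1 \<le> real q ^ (m - i) - 1" using b by simp
    ultimately show ?thesis by (simp only: le_divide_eq_1_pos)
  qed
qed

lemma gb_succ: "gauss_binom q (Suc m) (Suc r) =
   (real q ^ Suc m - 1) / (real q ^ Suc r - 1) * gauss_binom q m r"
  unfolding gauss_binom_def prod.lessThan_Suc_shift by simp

lemma ratio_ge: assumes "2 \<le> q" "r \<le> m"
  shows "real q ^ (m - r) \<le> (real q ^ Suc m - 1) / (real q ^ Suc r - 1)"
proof -
  have q1: "1 < real q" using assms by simp
  have a: "1 < real q ^ Suc r" using q1 by (simp add: one_less_power del: power_Suc)
  have c: "1 \<le> real q ^ (m - r)" using q1 by simp
  have e: "real q ^ (m - r) * real q ^ Suc r = real q ^ Suc m"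
    using assms by (simp add: power_add[symmetric])
  have "real q ^ (m - r) * (real q ^ Suc r - 1) = real q ^ Suc m - real q ^ (m - r)"
    using e by (simp add: right_diff_distrib del: power_Suc)
  hence "real q ^ (m - r) * (real q ^ Suc r - 1) \<le> real q ^ Suc m - 1"
    using c by linarith
  moreover have "0 < real q ^ Suc r - 1" using a by simp
  ultimately show ?thesis by (simp only: pos_le_divide_eq)
qed

lemma gb_mono: assumes "2 \<le> q" "r \<le> m"
  shows "gauss_binom q m r \<le> gauss_binom q (Suc m) (Suc r)"
proof -
  have "1 \<le> real q ^ (m - r)" using assms by simp
  hence "1 \<le> (real q ^ Suc m - 1) / (real q ^ Suc r - 1)" using ratio_ge[OF assms] by linarith
  moreover have "1 \<le> gauss_binom q m r" using gb_ge1 assms by blast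
  ultimately show ?thesis unfolding gb_succ
    using mult_right_mono[of 1 "(real q ^ Suc m - 1) / (real q ^ Suc r - 1)" "gauss_binom q m r"] by simp
qed

lemma gb_mono_iter: assumes "2 \<le> q" "r \<le> m"
  shows "gauss_binom q m r \<le> gauss_binom q (m + j) (r + j)"
proof (induction j)
  case 0 then show ?case by simp
next
  case (Suc j)
  have "gauss_binom q (m + j) (r + j) \<le> gauss_binom q (Suc (m + j)) (Suc (r + j))"
    using gb_mono assms by simp
  then show ?case using Suc by simp
qed

lemma key_ineq:
  fixes Q a b Z d :: real
  assumes dd: "d = Q - 1" and Q2: "Q \<ge> 2" and a2: "a \<ge> Q" and b2: "b \<ge> Q"
    and Z1: "Z \<ge> Q * (a * b)" and Z2: "Q = 2 \<Longrightarrow> Z \<ge> 4 * (a * b)" and Q3: "Q = 2 \<or> Q \<ge> 3"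
  shows "d * (Q * b - 1) + Q * (a - 1) * (b - 1) + d * d < d * d * Z"
proof (cases "Q = 2")
  case True
  have abpos: "a * b \<ge> 2 * b" using a2 True b2 mult_right_mono[of 2 a b] by simp
  have "d = 1" using dd True by simp
  moreover have "Q * (a - 1) * (b - 1) = Q * (a * b) - Q * a - Q * b + Q" by (simp add: algebra_simps)
  ultimately have "d * (Q * b - 1) + Q * (a - 1) * (b - 1) + d * d = 2 + 2 * (a * b) - 2 * a"
    using True by (simp add: algebra_simps)
  moreover have "d * d * Z = Z" using \<open>d = 1\<close> by simp
  moreover have "4 * (a * b) \<le> Z" using Z2 True by simp
  ultimately show ?thesis using True abpos a2 b2 by linarith
next
  case False
  hence d2: "d \<ge> 2" using dd Q3 by simp
  have "d * d \<ge> 4" using d2 mult_mono[of 2 d 2 d] by simp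
  moreover have "Q * (a * b) \<ge> 0" using Q2 a2 b2 by simp
  ultimately have e1: "d * d * Z \<ge> 4 * (Q * (a * b))" using Z1 mult_mono[of 4 "d*d" "Q*(a*b)" Z] by simp
  have e2: "d * (Q * b) \<le> a * (Q * b)" using dd a2 Q2 b2 by (intro mult_right_mono) auto
  have e2': "a * (Q * b) = Q * (a * b)" by simp
  have e3: "Q * (a - 1) * (b - 1) \<le> Q * (a * b)"
  proof -
    have "Q * (a - 1) * (b - 1) = Q * (a * b) - Q * a - Q * b + Q" by (simp add: algebra_simps)
    moreover have "Q * a \<ge> Q" using a2 Q2 by (simp add: mult_le_cancel_left1)
    moreover have "Q * b \<ge> 0" using Q2 b2 by simp
    ultimately show ?thesis by linarith
  qed
  have ab: "a * b \<ge> Q * Q" using a2 b2 Q2 mult_mono[of Q a Q b] by simp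
  have e4: "d * d < Q * (a * b)"
  proof -
    have "d * d < Q * Q" using dd d2 mult_strict_mono[of d Q d Q] by simp
    moreover have "Q \<le> Q * Q" using Q2 mult_right_mono[of 1 Q Q] by simp
    hence "Q \<le> a * b" using ab by linarith
    hence "Q * Q \<le> Q * (a * b)" using Q2 mult_left_mono[of Q "a*b" Q] by simp
    ultimately show ?thesis by linarith
  qed
  have e5: "d * (Q * b - 1) = d * (Q * b) - d" by (simp add: right_diff_distrib)
  have "Q * (a * b) \<ge> 0" using Q2 a2 b2 by simp
  then show ?thesis using e1 e2 e2' e3 e4 e5 d2 by linarith
qed

theorem lemma2p4:
  fixes q n k t x :: nat
  assumes "prime_power_nat q"
    and "n > 0" and "k > 0" and "t > 0"
    and "k \<ge> t + 3"
    and "n \<ge> 2 * k + 1 + (if q = 2 then 1 else 0)"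
    and "t + 2 \<le> x" and "x \<le> k - 1"
  shows "gfun q n k t x < gfun q n k t (x + 1)"
proof -
  have nk: "n \<ge> 2 * k + 1" using assms(6) by (simp split: if_splits)
  have kt: "k \<ge> t + 3" "t + 2 \<le> x" "x \<le> k - 1" "t > 0" using assms by auto
  obtain p e where pe: "prime p" "e \<ge> 1" "q = p ^ e" using assms(1) unfolding prime_power_nat_def by blast
  have "p \<ge> 2" using pe prime_ge_2_nat by blast
  hence q2: "q \<ge> 2" using pe
    using self_le_power[of p e] by simp
  define Q where "Q = real q"
  have Q2: "Q \<ge> 2" using q2 Q_def by simp
  define B where "B s = (Q ^ s - 1) / (Q - 1)" for s
  have Bs: "B (Suc s) = B s + Q ^ s" for s using Q2 unfolding B_def by (simp add: field_simps)
  have Bs2: "B (Suc s) = Q * B s + 1" for s using Q2 unfolding B_def by (simp add: field_simps)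
  have Bpos: "B s \<ge> 0" for s using Q2 unfolding B_def by simp
  define G1 where "G1 = gauss_binom q (n - t - 1) (k - t - 1)"
  define G2 where "G2 = gauss_binom q (n - t - 2) (k - t - 2)"
  define H where "H = gauss_binom q (n - x) (k - x)"
  define H' where "H' = gauss_binom q (n - (x+1)) (k - (x+1))"
  define P where "P = Q ^ (x - t)"
  have Ppos: "P > 0" using Q2 P_def by simp
  have G2ge: "G2 \<ge> 1" unfolding G2_def using gb_ge1 q2 nk by simp
  have Hle: "H \<le> G2"
  proof -
    have "gauss_binom q (n - x) (k - x) \<le> gauss_binom q (n - x + (x - t - 2)) (k - x + (x - t - 2))"
      using gb_mono_iter[OF q2, of "k - x" "n - x" "x - t - 2"] nk kt by simp
    moreover have "n - x + (x - t - 2) = n - t - 2" "k - x + (x - t - 2) = k - t - 2" using nk kt by auto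
    ultimately show ?thesis unfolding H_def G2_def by simp
  qed
  have H'ge: "H' \<ge> 0" unfolding H'_def proof -
    have "k-(x+1) \<le> n-(x+1)" using nk by arith
    thus "0 \<le> gauss_binom q (n - (x + 1)) (k - (x + 1))" using gb_ge1[OF q2, of "k - (x+1)" "n - (x+1)"] by linarith
  qed
  have G1ge: "G1 \<ge> Q ^ (n - k) * G2"
  proof -
    have e1: "n - t - 1 = Suc (n - t - 2)" "k - t - 1 = Suc (k - t - 2)" using nk kt by auto
    have e2: "n - t - 2 - (k - t - 2) = n - k" using nk kt by auto
    have r: "Q ^ (n - k) \<le> (real q ^ Suc (n - t - 2) - 1) / (real q ^ Suc (k - t - 2) - 1)"
    proof -
      have "k - t - 2 \<le> n - t - 2" using nk by arith
      from ratio_ge[OF q2 this] show ?thesis unfolding e2 Q_def .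
    qed
    show ?thesis unfolding G1_def e1 gb_succ G2_def[symmetric]
      using mult_right_mono[OF r, of G2] G2ge unfolding Q_def by linarith
  qed
  define C where "C = B (k - t + 1)"
  define E where "E = B (k - t)"
  have gx: "gfun q n k t x = B (x - t) * G1 + P * B (k - x + 1) * C * G2 + P * B (k - x + 1)
       + Q * P * B t * E * H + 2"
    unfolding gfun_def gb1 G1_def G2_def H_def C_def E_def B_def P_def Q_def
    by (simp add: power_add)
  have ex: "x + 1 - t = Suc (x - t)" "k - (x+1) + 1 = k - x" "k - x + 1 = Suc (k - x)"
     "x + 1 - t + 1 = Suc (Suc (x - t))" using nk kt by auto
  have gx1: "gfun q n k t (x+1) = B (Suc (x - t)) * G1 + Q * P * B (k - x) * C * G2 + Q * P * B (k - x)
       + Q * Q * P * B t * E * H' + 2"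
    unfolding gfun_def gb1 G1_def G2_def H'_def C_def E_def B_def P_def Q_def ex
    by (simp add: power_add)
  have diff: "gfun q n k t (x+1) - gfun q n k t x = P * (G1 - C * G2 - 1 - Q * B t * E * H) + Q * Q * P * B t * E * H'"
    using Bs[of "x - t"] Bs2[of "k - x"] unfolding gx gx1 P_def by (simp add: algebra_simps)
  have key: "C + Q * B t * E + 1 < Q ^ (n - k)"
  proof -
    define a where "a = Q ^ t"
    define b where "b = Q ^ (k - t)"
    define Z where "Z = Q ^ (n - k)"
    define d where "d = Q - 1"
    have d1: "d \<ge> 1" using Q2 d_def by simp
    have a2: "a \<ge> Q"
    proof -
      have "Q ^ 1 \<le> Q ^ t" using Q2 kt by (intro power_increasing) auto
      thus ?thesis unfolding a_def by simp
    qed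
    have b2: "b \<ge> Q"
    proof -
      have "Q ^ 1 \<le> Q ^ (k - t)" using Q2 kt by (intro power_increasing) auto
      thus ?thesis unfolding b_def by simp
    qed
    have dC0: "d * C = Q ^ (k - t + 1) - 1" unfolding d_def C_def B_def using Q2 by simp
    have dC: "d * C = Q * b - 1" unfolding dC0 b_def by simp
    have dBt: "d * B t = a - 1" unfolding d_def a_def B_def using Q2 by simp
    have dE: "d * E = b - 1" unfolding d_def b_def E_def B_def using Q2 by simp
    have ab: "Q ^ k = a * b" unfolding a_def b_def using kt by (simp add: power_add[symmetric])
    have Z1: "Z \<ge> Q * (a * b)"
    proof -
      have "Q ^ (k+1) \<le> Q ^ (n - k)" using Q2 nk by (intro power_increasing) auto
      thus ?thesis unfolding Z_def using ab by simp
    qed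
    have Z2: "Z \<ge> 4 * (a * b)" if "Q = 2"
    proof -
      have "q = 2" using that Q_def by simp
      hence "Q ^ (k+2) \<le> Q ^ (n - k)" using Q2 assms(6) by (intro power_increasing) auto
      thus ?thesis unfolding Z_def using ab that by simp
    qed
    have Q3: "Q = 2 \<or> Q \<ge> 3" using q2 Q_def by auto
    have lhs: "d * d * (C + Q * B t * E + 1) = d * (Q * b - 1) + Q * (a - 1) * (b - 1) + d * d"
    proof -
      have "d * d * (C + Q * B t * E + 1) = d * (d * C) + Q * (d * B t) * (d * E) + d * d"
        by (simp add: algebra_simps)
      thus ?thesis using dC dBt dE by simp
    qed
    have "d * (Q * b - 1) + Q * (a - 1) * (b - 1) + d * d < d * d * Z"
      using key_ineq[OF d_def Q2 a2 b2 Z1 Z2 Q3] by blast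
    hence "d * d * (C + Q * B t * E + 1) < d * d * Z" using lhs by simp
    thus ?thesis unfolding Z_def using d1 by simp
  qed
  have QBE: "Q * B t * E \<ge> 0" using Q2 Bpos[of t] Bpos[of "k - t"] unfolding E_def by simp
  have HG: "Q * B t * E * H \<le> Q * B t * E * G2" using Hle QBE by (simp add: mult_left_mono)
  have Cpos: "C \<ge> 0" unfolding C_def using Bpos by simp
  have pos: "G1 - C * G2 - 1 - Q * B t * E * H > 0"
  proof -
    define w where "w = Q ^ (n - k) - C - Q * B t * E"
    have w1: "w > 1" using key w_def by simp
    have "w * G2 \<ge> w" using w1 G2ge mult_left_mono[of 1 G2 w] by simp
    hence "Q ^ (n - k) * G2 - C * G2 - Q * B t * E * G2 > 1" using w1 unfolding w_def by (simp add: algebra_simps)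
    thus ?thesis using G1ge HG by linarith
  qed
  have "Q * Q * P * B t * E * H' \<ge> 0" using Q2 Ppos Bpos[of t] Bpos[of "k-t"] H'ge unfolding E_def by simp
  moreover have "P * (G1 - C * G2 - 1 - Q * B t * E * H) > 0" using pos Ppos by simp
  ultimately have "gfun q n k t (x+1) - gfun q n k t x > 0" unfolding diff by linarith
  thus ?thesis by simp
qed

end
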